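(* There is an absolute constant $c$ such that the following holds. Let $G$ be a simple graph given as a stream of $m$ distinct edges, with $W\ge m$ wedges and $T\ge1$ triangles. Fix $\beta\in(0,1)$, let $\beta'=\beta/5$, and let $\mathcal{R}_m=(r_1,\dots,r_s)$ be $s$ independent uniformly random edges of $G$ with $s\ge c\,m/(\beta^3\sqrt{T})$. Let $Y$ be the number of index pairs $i<j$ such that $\{r_i,r_j\}$ is a wedge, and $Z$ the number of index pairs $i<j$ such that $\{r_i,r_j\}$ is a future-closed wedge. Then $\mathbf{E}[Y]=s(s-1)W/m^2$ and with probability greater than $1-\beta'$, $|Y-\mathbf{E}[Y]|\le\beta'\mathbf{E}[Y]$. Moreover $\mathbf{E}[Z]=s(s-1)T/m^2$ and with probability greater than $1-\beta'$, $|Z-\mathbf{E}[Z]|\le(\beta' W/T)\mathbf{E}[Z]$.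
   Context: A wedge is a path of length 2, i.e. an unordered pair of distinct edges sharing exactly one vertex; $W$ is the number of wedges of $G$. Edges carry their stream positions $e_1,\dots,e_m$. For each triangle of $G$ with edges $e_i,e_j,e_k$, $i<j<k$, the wedge $\{e_i,e_j\}$ is called future-closed; there are exactly $T$ future-closed wedges. *)

theory Defs
  imports "HOL-Probability.Probability"
begin

definition edge_stream :: "nat set list \<Rightarrow> bool" where
  "edge_stream es \<longleftrightarrow> distinct es \<and> (\<forall>e\<in>set es. card e = 2)"

definition wedges :: "nat set list \<Rightarrow> nat set set set" where
  "wedges es = {{e, f} | e f. e \<in> set es \<and> f \<in> set es \<and> e \<noteq> f \<and> card (e \<inter> f) = 1}"

definition triangles :: "nat set list \<Rightarrow> nat set set" where
  "triangles es = {t. card t = 3 \<and> (\<forall>u\<in>t. \<forall>v\<in>t. u \<noteq> v \<longrightarrow> {u, v} \<in> set es)}"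

definition tri_edges :: "nat set \<Rightarrow> nat set set" where
  "tri_edges t = {{u, v} | u v. u \<in> t \<and> v \<in> t \<and> u \<noteq> v}"

definition fc_wedges :: "nat set list \<Rightarrow> nat set set set" where
  "fc_wedges es = {{es ! i, es ! j} | i j k. i < j \<and> j < k \<and> k < length es \<and>
      (\<exists>t\<in>triangles es. {es ! i, es ! j, es ! k} = tri_edges t)}"

definition edge_sample :: "nat set list \<Rightarrow> nat \<Rightarrow> (nat \<Rightarrow> nat set) pmf" where
  "edge_sample es s = Pi_pmf {..<s} undefined (\<lambda>_. pmf_of_set (set es))"

definition Ycount :: "nat set list \<Rightarrow> nat \<Rightarrow> (nat \<Rightarrow> nat set) \<Rightarrow> nat" where
  "Ycount es s r = card {(i, j). i < j \<and> j < s \<and> {r i, r j} \<in> wedges es}"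

definition Zcount :: "nat set list \<Rightarrow> nat \<Rightarrow> (nat \<Rightarrow> nat set) \<Rightarrow> nat" where
  "Zcount es s r = card {(i, j). i < j \<and> j < s \<and> {r i, r j} \<in> fc_wedges es}"

end

theory Submission
  imports Defs
begin



lemma Pi_pair_uniform:
  assumes A: "finite A" "a \<in> A" "b \<in> A" "a \<noteq> b" and E: "finite E" "E \<noteq> {}"
  shows "map_pmf (\<lambda>r. (r a, r b)) (Pi_pmf A d (\<lambda>_. pmf_of_set E)) = pmf_of_set (E \<times> E)"
proof (rule pmf_eqI)
  fix z :: "'b \<times> 'b"
  obtain x y where z: "z = (x, y)" by (cases z)
  define B where "B = (\<lambda>l. if l = a then {x} else if l = b then {y} else (UNIV :: 'b set))"
  have pre: "(\<lambda>r. (r a, r b)) -` {z} = Pi A B"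
    using A unfolding z B_def by (auto simp: Pi_def)
  have "pmf (map_pmf (\<lambda>r. (r a, r b)) (Pi_pmf A d (\<lambda>_. pmf_of_set E))) z
      = (\<Prod>l\<in>A. measure_pmf.prob (pmf_of_set E) (B l))"
    unfolding pmf_map pre using A by (simp add: measure_Pi_pmf_Pi)
  also have "\<dots> = (\<Prod>l\<in>{a,b}. measure_pmf.prob (pmf_of_set E) (B l))"
    using A by (intro prod.mono_neutral_right) (auto simp: B_def)
  also have "\<dots> = pmf (pmf_of_set E) x * pmf (pmf_of_set E) y"
    using A by (simp add: B_def measure_pmf_single)
  also have "\<dots> = pmf (pmf_of_set (E \<times> E)) z"
    using E by (simp add: z card_cartesian_product indicator_def)
  finally show "pmf (map_pmf (\<lambda>r. (r a, r b)) (Pi_pmf A d (\<lambda>_. pmf_of_set E))) z = pmf (pmf_of_set (E \<times> E)) z" .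
qed

lemma Pi_triple_uniform:
  assumes A: "finite A" "a \<in> A" "b \<in> A" "c \<in> A" "a \<noteq> b" "a \<noteq> c" "b \<noteq> c" and E: "finite E" "E \<noteq> {}"
  shows "map_pmf (\<lambda>r. (r a, r b, r c)) (Pi_pmf A d (\<lambda>_. pmf_of_set E)) = pmf_of_set (E \<times> E \<times> E)"
proof (rule pmf_eqI)
  fix z :: "'b \<times> 'b \<times> 'b"
  obtain x y w where z: "z = (x, y, w)" by (cases z)
  define B where "B = (\<lambda>l. if l = a then {x} else if l = b then {y} else if l = c then {w} else (UNIV :: 'b set))"
  have pre: "(\<lambda>r. (r a, r b, r c)) -` {z} = Pi A B"
  proof (rule set_eqI)
    fix r :: "'a \<Rightarrow> 'b"
    show "r \<in> (\<lambda>r. (r a, r b, r c)) -` {z} \<longleftrightarrow> r \<in> Pi A B"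
    proof
      assume "r \<in> (\<lambda>r. (r a, r b, r c)) -` {z}"
      then show "r \<in> Pi A B" by (simp add: z B_def Pi_def)
    next
      assume h: "r \<in> Pi A B"
      have "r a \<in> B a" "r b \<in> B b" "r c \<in> B c" using h A by (auto simp: Pi_def)
      then show "r \<in> (\<lambda>r. (r a, r b, r c)) -` {z}" using A by (simp add: z B_def)
    qed
  qed
  have "pmf (map_pmf (\<lambda>r. (r a, r b, r c)) (Pi_pmf A d (\<lambda>_. pmf_of_set E))) z
      = (\<Prod>l\<in>A. measure_pmf.prob (pmf_of_set E) (B l))"
    unfolding pmf_map pre using A by (simp add: measure_Pi_pmf_Pi)
  also have "\<dots> = (\<Prod>l\<in>{a,b,c}. measure_pmf.prob (pmf_of_set E) (B l))"
    using A by (intro prod.mono_neutral_right) (auto simp: B_def)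
  also have "\<dots> = pmf (pmf_of_set E) x * (pmf (pmf_of_set E) y * pmf (pmf_of_set E) w)"
    using A by (simp add: B_def measure_pmf_single)
  also have "\<dots> = pmf (pmf_of_set (E \<times> E \<times> E)) z"
    using E by (simp add: z card_cartesian_product indicator_def)
  finally show "pmf (map_pmf (\<lambda>r. (r a, r b, r c)) (Pi_pmf A d (\<lambda>_. pmf_of_set E))) z = pmf (pmf_of_set (E \<times> E \<times> E)) z" .
qed

lemma Pi_quad_uniform:
  assumes A: "finite A" "a \<in> A" "b \<in> A" "c \<in> A" "e \<in> A" "a \<noteq> b" "a \<noteq> c" "b \<noteq> c"
     "a \<noteq> e" "b \<noteq> e" "c \<noteq> e" and E: "finite E" "E \<noteq> {}"
  shows "map_pmf (\<lambda>r. (r a, r b, r c, r e)) (Pi_pmf A d (\<lambda>_. pmf_of_set E)) = pmf_of_set (E \<times> E \<times> E \<times> E)"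
proof (rule pmf_eqI)
  fix z :: "'b \<times> 'b \<times> 'b \<times> 'b"
  obtain x y w v where z: "z = (x, y, w, v)" by (cases z)
  define B where "B = (\<lambda>l. if l = a then {x} else if l = b then {y} else if l = c then {w}
     else if l = e then {v} else (UNIV :: 'b set))"
  have pre: "(\<lambda>r. (r a, r b, r c, r e)) -` {z} = Pi A B"
  proof (rule set_eqI)
    fix r :: "'a \<Rightarrow> 'b"
    show "r \<in> (\<lambda>r. (r a, r b, r c, r e)) -` {z} \<longleftrightarrow> r \<in> Pi A B"
    proof
      assume "r \<in> (\<lambda>r. (r a, r b, r c, r e)) -` {z}"
      then show "r \<in> Pi A B" by (simp add: z B_def Pi_def)
    next
      assume h: "r \<in> Pi A B"
      have "r a \<in> B a" "r b \<in> B b" "r c \<in> B c" "r e \<in> B e" using h A by (auto simp: Pi_def)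
      then show "r \<in> (\<lambda>r. (r a, r b, r c, r e)) -` {z}" using A by (simp add: z B_def)
    qed
  qed
  have "pmf (map_pmf (\<lambda>r. (r a, r b, r c, r e)) (Pi_pmf A d (\<lambda>_. pmf_of_set E))) z
      = (\<Prod>l\<in>A. measure_pmf.prob (pmf_of_set E) (B l))"
    unfolding pmf_map pre using A by (simp add: measure_Pi_pmf_Pi)
  also have "\<dots> = (\<Prod>l\<in>{a,b,c,e}. measure_pmf.prob (pmf_of_set E) (B l))"
    using A by (intro prod.mono_neutral_right) (auto simp: B_def)
  also have "\<dots> = pmf (pmf_of_set E) x * (pmf (pmf_of_set E) y * (pmf (pmf_of_set E) w * pmf (pmf_of_set E) v))"
    using A by (simp add: B_def measure_pmf_single)
  also have "\<dots> = pmf (pmf_of_set (E \<times> E \<times> E \<times> E)) z"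
    using E by (simp add: z card_cartesian_product indicator_def)
  finally show "pmf (map_pmf (\<lambda>r. (r a, r b, r c, r e)) (Pi_pmf A d (\<lambda>_. pmf_of_set E))) z = pmf (pmf_of_set (E \<times> E \<times> E \<times> E)) z" .
qed

lemma exp2:
  fixes g :: "'b \<Rightarrow> 'b \<Rightarrow> real"
  assumes A: "finite A" "a \<in> A" "b \<in> A" "a \<noteq> b" and E: "finite E" "E \<noteq> {}"
  shows "measure_pmf.expectation (Pi_pmf A d (\<lambda>_. pmf_of_set E)) (\<lambda>r. g (r a) (r b))
     = (\<Sum>x\<in>E. \<Sum>y\<in>E. g x y) / real (card E) ^ 2"
proof -
  have "measure_pmf.expectation (Pi_pmf A d (\<lambda>_. pmf_of_set E)) (\<lambda>r. g (r a) (r b))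
      = measure_pmf.expectation (map_pmf (\<lambda>r. (r a, r b)) (Pi_pmf A d (\<lambda>_. pmf_of_set E))) (\<lambda>(x,y). g x y)"
    by simp
  also have "\<dots> = measure_pmf.expectation (pmf_of_set (E \<times> E)) (\<lambda>(x,y). g x y)"
    using Pi_pair_uniform[OF assms] by simp
  also have "\<dots> = (\<Sum>x\<in>E. \<Sum>y\<in>E. g x y) / real (card E) ^ 2"
    using E by (simp add: integral_pmf_of_set sum.cartesian_product card_cartesian_product power2_eq_square)
  finally show ?thesis .
qed

lemma exp3:
  fixes g :: "'b \<Rightarrow> 'b \<Rightarrow> 'b \<Rightarrow> real"
  assumes A: "finite A" "a \<in> A" "b \<in> A" "c \<in> A" "a \<noteq> b" "a \<noteq> c" "b \<noteq> c" and E: "finite E" "E \<noteq> {}"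
  shows "measure_pmf.expectation (Pi_pmf A d (\<lambda>_. pmf_of_set E)) (\<lambda>r. g (r a) (r b) (r c))
     = (\<Sum>x\<in>E. \<Sum>y\<in>E. \<Sum>z\<in>E. g x y z) / real (card E) ^ 3"
proof -
  have "measure_pmf.expectation (Pi_pmf A d (\<lambda>_. pmf_of_set E)) (\<lambda>r. g (r a) (r b) (r c))
      = measure_pmf.expectation (map_pmf (\<lambda>r. (r a, r b, r c)) (Pi_pmf A d (\<lambda>_. pmf_of_set E))) (\<lambda>(x,y,z). g x y z)"
    by simp
  also have "\<dots> = measure_pmf.expectation (pmf_of_set (E \<times> E \<times> E)) (\<lambda>(x,y,z). g x y z)"
    using Pi_triple_uniform[OF assms] by simp
  also have "\<dots> = (\<Sum>x\<in>E. \<Sum>y\<in>E. \<Sum>z\<in>E. g x y z) / real (card E) ^ 3"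
    using E by (simp add: integral_pmf_of_set sum.cartesian_product card_cartesian_product power3_eq_cube)
  finally show ?thesis .
qed

lemma exp4:
  fixes g :: "'b \<Rightarrow> 'b \<Rightarrow> 'b \<Rightarrow> 'b \<Rightarrow> real"
  assumes A: "finite A" "a \<in> A" "b \<in> A" "c \<in> A" "e \<in> A" "a \<noteq> b" "a \<noteq> c" "b \<noteq> c"
     "a \<noteq> e" "b \<noteq> e" "c \<noteq> e" and E: "finite E" "E \<noteq> {}"
  shows "measure_pmf.expectation (Pi_pmf A d (\<lambda>_. pmf_of_set E)) (\<lambda>r. g (r a) (r b) (r c) (r e))
     = (\<Sum>x\<in>E. \<Sum>y\<in>E. \<Sum>z\<in>E. \<Sum>w\<in>E. g x y z w) / real (card E) ^ 4"
proof -
  have "measure_pmf.expectation (Pi_pmf A d (\<lambda>_. pmf_of_set E)) (\<lambda>r. g (r a) (r b) (r c) (r e))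
      = measure_pmf.expectation (map_pmf (\<lambda>r. (r a, r b, r c, r e)) (Pi_pmf A d (\<lambda>_. pmf_of_set E))) (\<lambda>(x,y,z,w). g x y z w)"
    by simp
  also have "\<dots> = measure_pmf.expectation (pmf_of_set (E \<times> E \<times> E \<times> E)) (\<lambda>(x,y,z,w). g x y z w)"
    using Pi_quad_uniform[OF assms] by simp
  also have "\<dots> = (\<Sum>x\<in>E. \<Sum>y\<in>E. \<Sum>z\<in>E. \<Sum>w\<in>E. g x y z w) / real (card E) ^ 4"
    using E by (simp add: integral_pmf_of_set sum.cartesian_product card_cartesian_product power4_eq_xxxx)
  finally show ?thesis .
qed




lemma card_pairs: "2 * card {(i::nat,j). i<j \<and> j<s} = s*(s-1)"
proof (induction s)
  case 0 show ?case by simp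
next
  case (Suc n)
  have eq: "{(i::nat,j). i<j \<and> j<Suc n} = {(i,j). i<j \<and> j<n} \<union> (\<lambda>i. (i,n)) ` {..<n}" by auto
  have fin: "finite {(i::nat,j). i<j \<and> j<n}" by (rule finite_subset[of _ "{..<n}\<times>{..<n}"]) auto
  have "card {(i::nat,j). i<j \<and> j<Suc n} = card {(i,j). i<j \<and> j<n} + n"
    unfolding eq by (subst card_Un_disjoint) (auto simp: fin card_image inj_on_def)
  then show ?case using Suc.IH by (cases n) (auto simp: algebra_simps)
qed

lemma pair_count_moments:
  fixes E :: "'a set" and d :: 'a and Q :: "'a \<Rightarrow> 'a \<Rightarrow> bool" and s :: nat
  assumes E: "finite E" "E \<noteq> {}" and sym: "\<And>x y. Q x y = Q y x"
  defines "D \<equiv> Pi_pmf {..<s} d (\<lambda>_. pmf_of_set E)"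
  defines "X \<equiv> (\<lambda>r. real (card {(i,j). i<j \<and> j<s \<and> Q (r i) (r j)}))"
  defines "m \<equiv> real (card E)"
  defines "N \<equiv> (\<Sum>x\<in>E. real (card {y\<in>E. Q x y}))"
  defines "A \<equiv> (\<Sum>x\<in>E. real (card {y\<in>E. Q x y})^2)"
  shows "measure_pmf.expectation D X = real s * (real s - 1) / 2 * N / m^2"
    and "measure_pmf.variance D X \<le> measure_pmf.expectation D X + 4 * real s ^ 3 * A / m^3"
proof -
  define P where "P = {(i::nat,j). i<j \<and> j<s}"
  have finP: "finite P" unfolding P_def by (rule finite_subset[of _ "{..<s}\<times>{..<s}"]) auto
  have cardP: "2 * real (card P) = real s * (real s - 1)"
  proof -
    have "2 * card P = s * (s-1)" unfolding P_def by (rule card_pairs)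
    then have "real (2 * card P) = real (s * (s - 1))" by simp
    then show ?thesis by (cases s) (auto simp: algebra_simps)
  qed
  define ind where "ind = (\<lambda>(p::nat\<times>nat) (r::nat\<Rightarrow>'a). if Q (r (fst p)) (r (snd p)) then 1 else (0::real))"
  have Xsum: "X r = (\<Sum>p\<in>P. ind p r)" for r
  proof -
    have "{(i,j). i<j \<and> j<s \<and> Q (r i) (r j)} = {p\<in>P. Q (r (fst p)) (r (snd p))}"
      unfolding P_def by auto
    then have "X r = real (card {p\<in>P. Q (r (fst p)) (r (snd p))})" unfolding X_def by simp
    also have "\<dots> = (\<Sum>p\<in>P. ind p r)" unfolding ind_def using finP by (simp add: sum.inter_filter[symmetric])
    finally show ?thesis .
  qed
  have finD: "finite (set_pmf D)" unfolding D_def using E by (auto simp: set_Pi_pmf)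
  have int: "integrable (measure_pmf D) f" for f :: "(nat \<Rightarrow> 'a) \<Rightarrow> real"
    using finD by (rule integrable_measure_pmf_finite)
  have mpos: "m > 0" unfolding m_def using E by (simp add: card_gt_0_iff)
  have sumQ: "(\<Sum>y\<in>E. if Q x y then 1 else 0) = real (card {y\<in>E. Q x y})" for x
    using E by (simp add: sum.inter_filter[symmetric])
  have N2: "N = (\<Sum>x\<in>E. \<Sum>y\<in>E. if Q x y then 1 else 0)" unfolding N_def using sumQ by simp
  define \<mu>1 where "\<mu>1 = N / m^2"
  have E1: "measure_pmf.expectation D (ind p) = \<mu>1" if p: "p \<in> P" for p
  proof -
    have "measure_pmf.expectation D (ind p) = measure_pmf.expectation D (\<lambda>r. (\<lambda>x y. if Q x y then 1 else 0) (r (fst p)) (r (snd p)))"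
      unfolding ind_def by simp
    also have "\<dots> = (\<Sum>x\<in>E. \<Sum>y\<in>E. if Q x y then 1 else 0) / real (card E) ^ 2"
      unfolding D_def using p E by (intro exp2) (auto simp: P_def)
    finally show ?thesis unfolding \<mu>1_def N2 m_def .
  qed
  have EX: "measure_pmf.expectation D X = real (card P) * \<mu>1"
  proof -
    have "measure_pmf.expectation D X = measure_pmf.expectation D (\<lambda>r. \<Sum>p\<in>P. ind p r)"
      by (simp add: Xsum[abs_def])
    also have "\<dots> = (\<Sum>p\<in>P. measure_pmf.expectation D (ind p))"
      by (rule Bochner_Integration.integral_sum) (rule int)
    also have "\<dots> = (\<Sum>p\<in>P. \<mu>1)" by (rule sum.cong) (auto simp: E1)
    finally show ?thesis by simp
  qed
  show "measure_pmf.expectation D X = real s * (real s - 1) / 2 * N / m^2"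
  proof -
    have cP: "real (card P) = real s * (real s - 1) / 2" using cardP by simp
    show ?thesis unfolding EX \<mu>1_def cP by simp
  qed
  define sh where "sh = (\<lambda>p q::nat\<times>nat. fst q = fst p \<or> fst q = snd p \<or> snd q = fst p \<or> snd q = snd p)"
  have E3: "measure_pmf.expectation D (\<lambda>r. (if Q (r c) (r a) then 1 else 0) * (if Q (r c) (r b) then 1 else (0::real))) = A / m^3"
    if "c < s" "a < s" "b < s" "c \<noteq> a" "c \<noteq> b" "a \<noteq> b" for c a b
  proof -
    have S: "(\<Sum>x\<in>E. \<Sum>y\<in>E. \<Sum>z\<in>E. (if Q x y then 1 else 0) * (if Q x z then 1 else (0::real))) = A"
    proof -
      have "(\<Sum>x\<in>E. \<Sum>y\<in>E. \<Sum>z\<in>E. (if Q x y then 1 else 0) * (if Q x z then 1 else (0::real)))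
         = (\<Sum>x\<in>E. (\<Sum>y\<in>E. if Q x y then 1 else 0) * (\<Sum>z\<in>E. if Q x z then 1 else (0::real)))"
        by (simp only: sum_product)
      also have "\<dots> = A" unfolding A_def sumQ by (simp add: power2_eq_square)
      finally show ?thesis .
    qed
    have "measure_pmf.expectation D (\<lambda>r. (if Q (r c) (r a) then 1 else 0) * (if Q (r c) (r b) then 1 else (0::real))) = (\<Sum>x\<in>E. \<Sum>y\<in>E. \<Sum>z\<in>E. (if Q x y then 1 else 0) * (if Q x z then 1 else (0::real))) / real (card E) ^ 3"
      unfolding D_def using that E by (intro exp3[where g="\<lambda>x y z. (if Q x y then 1 else 0) * (if Q x z then 1 else (0::real))", simplified]) auto
    also have "\<dots> = A / m^3" using S unfolding m_def by simp
    finally show ?thesis .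
  qed
  have E4: "measure_pmf.expectation D (\<lambda>r. ind p r * ind q r) = \<mu>1^2"
    if "p \<in> P" "q \<in> P" "\<not> sh p q" for p q
  proof -
    obtain i j k l where pq: "p = (i,j)" "q = (k,l)" by (cases p, cases q)
    have d: "i < s" "j < s" "k < s" "l < s" "i \<noteq> j" "i \<noteq> k" "j \<noteq> k" "i \<noteq> l" "j \<noteq> l" "k \<noteq> l"
      using that unfolding pq P_def sh_def by auto
    have "measure_pmf.expectation D (\<lambda>r. ind p r * ind q r)
       = measure_pmf.expectation D (\<lambda>r. (\<lambda>x y z w. (if Q x y then 1 else 0) * (if Q z w then 1 else (0::real))) (r i) (r j) (r k) (r l))"
      unfolding ind_def pq by simp
    also have "\<dots> = (\<Sum>x\<in>E. \<Sum>y\<in>E. \<Sum>z\<in>E. \<Sum>w\<in>E. (if Q x y then 1 else 0) * (if Q z w then 1 else (0::real))) / real (card E) ^ 4"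
      unfolding D_def using d E by (intro exp4) auto
    also have "(\<Sum>x\<in>E. \<Sum>y\<in>E. \<Sum>z\<in>E. \<Sum>w\<in>E. (if Q x y then 1 else 0) * (if Q z w then 1 else (0::real)))
       = N * N"
    proof -
      have "N * N = (\<Sum>x\<in>E. \<Sum>y\<in>E. (if Q x y then 1 else 0) * (\<Sum>z\<in>E. \<Sum>w\<in>E. if Q z w then 1 else (0::real)))"
        unfolding N2 by (simp add: sum_distrib_right)
      also have "\<dots> = (\<Sum>x\<in>E. \<Sum>y\<in>E. \<Sum>z\<in>E. \<Sum>w\<in>E. (if Q x y then 1 else 0) * (if Q z w then 1 else (0::real)))"
        by (simp add: sum_distrib_left)
      finally show ?thesis by simp
    qed
    finally show ?thesis unfolding \<mu>1_def m_def by (simp add: power2_eq_square power4_eq_xxxx)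
  qed
  have Esh: "measure_pmf.expectation D (\<lambda>r. ind p r * ind q r) = A / m^3"
    if "p \<in> P" "q \<in> P" "sh p q" "p \<noteq> q" for p q
  proof -
    obtain i j k l where pq: "p = (i,j)" "q = (k,l)" by (cases p, cases q)
    have ij: "i < j" "j < s" "k < l" "l < s" using that unfolding pq P_def by auto
    have sh': "k = i \<or> k = j \<or> l = i \<or> l = j" using that unfolding pq sh_def by auto
    have ne: "(i,j) \<noteq> (k,l)" using that pq by simp
    show ?thesis
    proof (cases "k = i")
      case True
      then have "(\<lambda>r. ind p r * ind q r) = (\<lambda>r. (if Q (r i) (r j) then 1 else 0) * (if Q (r i) (r l) then 1 else (0::real)))"
        unfolding ind_def pq by simp
      moreover have "j \<noteq> l" using ne True by auto
      ultimately show ?thesis using E3[of i j l] ij True by simp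
    next
      case k: False
      show ?thesis
      proof (cases "k = j")
        case True
        then have "(\<lambda>r. ind p r * ind q r) = (\<lambda>r. (if Q (r j) (r i) then 1 else 0) * (if Q (r j) (r l) then 1 else (0::real)))"
          unfolding ind_def pq using sym by simp
        then show ?thesis using E3[of j i l] ij True by simp
      next
        case k2: False
        show ?thesis
        proof (cases "l = i")
          case True
          then have "(\<lambda>r. ind p r * ind q r) = (\<lambda>r. (if Q (r i) (r j) then 1 else 0) * (if Q (r i) (r k) then 1 else (0::real)))"
            unfolding ind_def pq using sym by simp
          then show ?thesis using E3[of i j k] ij True by simp
        next
          case False
          then have l: "l = j" using sh' k k2 by auto
          then have "(\<lambda>r. ind p r * ind q r) = (\<lambda>r. (if Q (r j) (r i) then 1 else 0) * (if Q (r j) (r k) then 1 else (0::real)))"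
            unfolding ind_def pq using sym by (simp add: mult.commute)
          then show ?thesis using E3[of j i k] ij l k by simp
        qed
      qed
    qed
  qed
  have Apos: "A \<ge> 0" unfolding A_def by (intro sum_nonneg) auto
  have Npos: "N \<ge> 0" unfolding N_def by (intro sum_nonneg) auto
  have mu1pos: "\<mu>1 \<ge> 0" unfolding \<mu>1_def using Npos mpos by simp
  have Ebound: "measure_pmf.expectation D (\<lambda>r. ind p r * ind q r)
      \<le> \<mu>1^2 + (if p = q then \<mu>1 else 0) + (if p \<noteq> q \<and> sh p q then A / m^3 else 0)"
    if "p \<in> P" "q \<in> P" for p q
  proof (cases "p = q")
    case True
    have "(\<lambda>r. ind p r * ind q r) = ind p" using True unfolding ind_def by (auto simp: fun_eq_iff)
    then show ?thesis using True E1[OF that(1)] by simp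
  next
    case False
    then show ?thesis using E4[OF that] Esh[OF that] Apos mpos by (cases "sh p q") auto
  qed
  have cnt: "card {q\<in>P. p \<noteq> q \<and> sh p q} \<le> 4 * s" for p
  proof -
    have "{q\<in>P. p \<noteq> q \<and> sh p q} \<subseteq> ({fst p, snd p} \<times> {..<s}) \<union> ({..<s} \<times> {fst p, snd p})"
      unfolding P_def sh_def by auto
    then have "card {q\<in>P. p \<noteq> q \<and> sh p q} \<le> card (({fst p, snd p} \<times> {..<s}) \<union> ({..<s} \<times> {fst p, snd p}))"
      by (intro card_mono) auto
    also have "\<dots> \<le> card ({fst p, snd p} \<times> {..<s}) + card ({..<s} \<times> {fst p, snd p})"
      by (rule card_Un_le)
    also have "\<dots> \<le> 2 * s + s * 2"
      by (intro add_mono) (auto simp: card_cartesian_product card_insert_le_m1 intro!: mult_right_mono mult_left_mono card_le_Suc0_iff_eq[THEN iffD2]|simp add: card_insert_if)+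
    finally show ?thesis by simp
  qed
  have EX2: "measure_pmf.expectation D (\<lambda>r. (X r)^2) \<le> (real (card P) * \<mu>1)^2 + real (card P) * \<mu>1 + 4 * real s ^ 3 * A / m^3"
  proof -
    have "measure_pmf.expectation D (\<lambda>r. (X r)^2) = measure_pmf.expectation D (\<lambda>r. \<Sum>p\<in>P. \<Sum>q\<in>P. ind p r * ind q r)"
      by (simp add: Xsum power2_eq_square sum_product)
    also have "\<dots> = (\<Sum>p\<in>P. \<Sum>q\<in>P. measure_pmf.expectation D (\<lambda>r. ind p r * ind q r))"
      by (simp add: Bochner_Integration.integral_sum int)
    also have "\<dots> \<le> (\<Sum>p\<in>P. \<Sum>q\<in>P. \<mu>1^2 + (if p = q then \<mu>1 else 0) + (if p \<noteq> q \<and> sh p q then A / m^3 else 0))"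
      by (intro sum_mono Ebound)
    also have "\<dots> = (\<Sum>p\<in>P. real (card P) * \<mu>1^2 + \<mu>1 + A / m^3 * real (card {q\<in>P. p \<noteq> q \<and> sh p q}))"
      using finP by (simp add: sum.distrib sum.inter_filter[symmetric] mult.commute)
    also have "\<dots> \<le> (\<Sum>p\<in>P. real (card P) * \<mu>1^2 + \<mu>1 + A / m^3 * (4 * real s))"
    proof (intro sum_mono add_left_mono mult_left_mono)
      fix p show "real (card {q\<in>P. p \<noteq> q \<and> sh p q}) \<le> 4 * real s" using cnt[of p] by linarith
      show "0 \<le> A / m^3" using Apos mpos by simp
    qed
    also have "\<dots> = (real (card P) * \<mu>1)^2 + real (card P) * \<mu>1 + real (card P) * (4 * real s) * A / m^3"
      by (simp add: power2_eq_square algebra_simps)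
    also have "\<dots> \<le> (real (card P) * \<mu>1)^2 + real (card P) * \<mu>1 + (real s)^2 * (4 * real s) * A / m^3"
    proof -
      have "real (card P) \<le> (real s)^2" using cardP by (simp add: power2_eq_square algebra_simps)
      then have "real (card P) * (4 * real s) * (A / m^3) \<le> (real s)^2 * (4 * real s) * (A / m^3)"
        using Apos mpos by (intro mult_right_mono) auto
      then show ?thesis by simp
    qed
    finally show ?thesis by (simp add: power3_eq_cube power2_eq_square algebra_simps)
  qed
  show "measure_pmf.variance D X \<le> measure_pmf.expectation D X + 4 * real s ^ 3 * A / m^3"
  proof -
    have V: "measure_pmf.variance D X = measure_pmf.expectation D (\<lambda>r. (X r)^2) - (measure_pmf.expectation D X)^2"
      by (rule measure_pmf.variance_eq) (rule int)+
    show ?thesis unfolding V using EX2 unfolding EX by simp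
  qed
qed




lemma key_arith:
  fixes s m w t b c e :: real
  assumes m: "m > 0" and t: "t \<ge> 1" and wt: "w \<ge> t" and b: "0 < b" "b \<le> 1" and s: "s \<ge> 2"
    and hyp: "b * s * t \<ge> c * m" and c: "c \<ge> 100000"
    and e: "e * (2 * m^2) \<ge> s^2 * w^2"
  shows "e + 16 * s^3 * w^3 / m^3 < (b / 125) * e^2"
proof -
  have w: "w \<ge> 1" using t wt by linarith
  have cm: "c * m \<ge> 100000 * m" using c m by simp
  have bst: "b * s * w \<ge> b * s * t" using wt b s by (intro mult_left_mono) auto
  have bsw: "b * s * w \<ge> 100000 * m" using bst hyp cm by linarith
  have epos: "e > 0"
  proof -
    have "s^2 * w^2 > 0" using s w by simp
    then have "e * (2 * m^2) > 0" using e by linarith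
    then show ?thesis using m by (simp add: zero_less_mult_iff)
  qed
  have "(b * s * w)^2 \<ge> (100000 * m)^2" using bsw m by (intro power_mono) auto
  then have A1: "b^2 * (s^2 * w^2) \<ge> 10000000000 * m^2" by (simp add: power_mult_distrib algebra_simps)
  have "b^2 * (s^2 * w^2) \<le> b * (s^2 * w^2)"
    using b by (intro mult_right_mono) (auto simp: power2_eq_square)
  also have "\<dots> \<le> b * (e * (2 * m^2))" using e b by (intro mult_left_mono) auto
  finally have "10000000000 * m^2 \<le> b * e * 2 * m^2" using A1 by (simp add: algebra_simps)
  then have "10000000000 \<le> b * e * 2" using m by simp
  then have A: "b * e \<ge> 250" by simp
  have partA: "e \<le> (b / 125) * e^2 / 2"
  proof -
    have "e * 250 \<le> e * (b * e)" using A epos by (intro mult_left_mono) auto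
    then show ?thesis by (simp add: power2_eq_square algebra_simps)
  qed
  have "(s^2 * w^2)^2 \<le> (e * (2 * m^2))^2" using e s w by (intro power_mono) auto
  then have B1: "s^4 * w^4 \<le> e^2 * 4 * m^4" by (simp add: power_mult_distrib algebra_simps flip: power_mult)
  have "16 * s^3 * w^3 * (16000 * m) < 16 * s^3 * w^3 * (b * s * w)"
  proof (rule mult_strict_left_mono)
    show "16000 * m < b * s * w" using bsw m by linarith
    show "16 * s^3 * w^3 > 0" using s w by simp
  qed
  also have "\<dots> = b * (s^4 * w^4) * 16" by (simp add: power_def algebra_simps)
  also have "\<dots> \<le> b * (e^2 * 4 * m^4) * 16" using B1 b by (intro mult_right_mono mult_left_mono) auto
  finally have "16 * s^3 * w^3 * 16000 * m < b * e^2 * 64 * m^4" by (simp add: algebra_simps)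
  then have "16 * s^3 * w^3 * 16000 * m < (b * e^2 * 64 * m^3) * m" by (simp add: power_def algebra_simps)
  then have "16 * s^3 * w^3 * 16000 < b * e^2 * 64 * m^3" using m
    by (simp add: mult_less_cancel_right)
  then have partB: "16 * s^3 * w^3 / m^3 < (b / 125) * e^2 / 2" using m by (simp add: field_simps)
  show ?thesis using partA partB by linarith
qed




lemma doubleton_pair_count:
  assumes S: "S \<subseteq> {{e, f} | e f. e \<in> E \<and> f \<in> E \<and> e \<noteq> f}" and E: "finite E"
  shows "(\<Sum>x\<in>E. real (card {y\<in>E. {x, y} \<in> S})) = 2 * real (card S)"
proof -
  have finS: "finite S"
  proof (rule finite_subset[OF S])
    have "{{e, f} | e f. e \<in> E \<and> f \<in> E \<and> e \<noteq> f} \<subseteq> (\<lambda>(e,f). {e,f}) ` (E \<times> E)" by auto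
    then show "finite {{e, f} | e f. e \<in> E \<and> f \<in> E \<and> e \<noteq> f}" by (rule finite_subset) (use E in auto)
  qed
  have "(\<Sum>x\<in>E. real (card {y\<in>E. {x, y} \<in> S})) = real (\<Sum>x\<in>E. card {y\<in>E. {x, y} \<in> S})" by simp
  also have "(\<Sum>x\<in>E. card {y\<in>E. {x, y} \<in> S}) = card (SIGMA x:E. {y\<in>E. {x, y} \<in> S})"
    using E by (simp add: card_SigmaI)
  also have "(SIGMA x:E. {y\<in>E. {x, y} \<in> S}) = (\<Union>w\<in>S. {(x,y). x \<noteq> y \<and> {x,y} = w})"
  proof (rule set_eqI)
    fix z :: "'a \<times> 'a"
    obtain x y where z: "z = (x,y)" by (cases z)
    show "z \<in> (SIGMA x:E. {y\<in>E. {x, y} \<in> S}) \<longleftrightarrow> z \<in> (\<Union>w\<in>S. {(x,y). x \<noteq> y \<and> {x,y} = w})"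
    proof
      assume "z \<in> (SIGMA x:E. {y\<in>E. {x, y} \<in> S})"
      then have xy: "x \<in> E" "y \<in> E" "{x,y} \<in> S" using z by auto
      then obtain e f where "{x,y} = {e,f}" "e \<noteq> f" using S by blast
      then have "x \<noteq> y" by (auto simp: doubleton_eq_iff)
      then show "z \<in> (\<Union>w\<in>S. {(x,y). x \<noteq> y \<and> {x,y} = w})" using xy z by auto
    next
      assume "z \<in> (\<Union>w\<in>S. {(x,y). x \<noteq> y \<and> {x,y} = w})"
      then have xy: "{x,y} \<in> S" using z by auto
      then obtain e f where ef: "{x,y} = {e,f}" "e \<in> E" "f \<in> E" using S by blast
      then have "x \<in> E" "y \<in> E" by (auto simp: doubleton_eq_iff)
      then show "z \<in> (SIGMA x:E. {y\<in>E. {x, y} \<in> S})" using xy z by auto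
    qed
  qed
  also have "card (\<Union>w\<in>S. {(x,y). x \<noteq> y \<and> {x,y} = w}) = (\<Sum>w\<in>S. card {(x,y). x \<noteq> y \<and> {x,y} = w})"
  proof (rule card_UN_disjoint[OF finS])
    show "\<forall>w\<in>S. finite {(x, y). x \<noteq> y \<and> {x, y} = w}"
    proof
      fix w assume "w \<in> S"
      then obtain e f where "w = {e,f}" using S by blast
      then have "{(x, y). x \<noteq> y \<and> {x, y} = w} \<subseteq> {(e,f),(f,e)}" by (auto simp: doubleton_eq_iff)
      then show "finite {(x, y). x \<noteq> y \<and> {x, y} = w}" by (rule finite_subset) auto
    qed
  qed auto
  also have "\<dots> = (\<Sum>w\<in>S. 2)"
  proof (rule sum.cong[OF refl])
    fix w assume "w \<in> S"
    then obtain e f where w: "w = {e,f}" "e \<noteq> f" using S by blast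
    then have "{(x, y). x \<noteq> y \<and> {x, y} = w} = {(e,f),(f,e)}" by (auto simp: doubleton_eq_iff)
    then show "card {(x, y). x \<noteq> y \<and> {x, y} = w} = 2" using w by simp
  qed
  finally show ?thesis by simp
qed

lemma wedges_sub: "wedges es \<subseteq> {{e, f} | e f. e \<in> set es \<and> f \<in> set es \<and> e \<noteq> f}"
  unfolding wedges_def by blast

lemma finite_wedges: "finite (wedges es)"
proof -
  have "wedges es \<subseteq> (\<lambda>(e,f). {e,f}) ` (set es \<times> set es)" unfolding wedges_def by auto
  then show ?thesis by (rule finite_subset) auto
qed

lemma card_wedges_le: "card (wedges es) \<le> length es ^ 2"
proof -
  have "wedges es \<subseteq> (\<lambda>(e,f). {e,f}) ` (set es \<times> set es)" unfolding wedges_def by auto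
  then have "card (wedges es) \<le> card ((\<lambda>(e,f). {e,f}) ` (set es \<times> set es))" by (rule card_mono[rotated]) auto
  also have "\<dots> \<le> card (set es \<times> set es)" by (rule card_image_le) auto
  also have "\<dots> \<le> length es ^ 2" by (simp add: card_cartesian_product power2_eq_square card_length mult_mono)
  finally show ?thesis .
qed




lemma dbl: "(x::real) \<le> 2 * y \<Longrightarrow> 2 * x \<le> 4 * y" by linarith

lemma choose2_suc: "2 * (Suc p choose 2) = Suc p * p"
proof (induction p)
  case 0 show ?case by simp
next
  case (Suc p)
  have "Suc (Suc p) choose 2 = Suc p + (Suc p choose 2)" by (simp add: numeral_2_eq_2)
  then show ?case using Suc.IH by simp
qed

lemma two_sets_int:
  assumes "card f = 2" "card g = 2" "f \<noteq> g" "u \<in> f" "u \<in> g"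
  shows "card (f \<inter> g) = 1"
proof -
  have ff: "finite f" "finite g" using assms by (auto intro: card_ge_0_finite)
  have ne: "f \<inter> g \<noteq> {}" using assms by auto
  have ge: "card (f \<inter> g) \<ge> 1" using ne ff by (simp add: Suc_le_eq card_gt_0_iff)
  have "card (f \<inter> g) < 2"
  proof (rule ccontr)
    assume "\<not> card (f \<inter> g) < 2"
    then have c: "card (f \<inter> g) \<ge> card f" "card (f \<inter> g) \<ge> card g" using assms by auto
    have "f \<inter> g = f" by (rule card_seteq) (use ff c in auto)
    moreover have "f \<inter> g = g" by (rule card_seteq) (use ff c in auto)
    ultimately have "f = g" by simp
    then show False using assms by auto
  qed
  then show ?thesis using ge by linarith
qed

lemma wedge_char:
  assumes "{e, f} \<in> wedges es"
  shows "e \<noteq> f \<and> card (e \<inter> f) = 1 \<and> e \<in> set es \<and> f \<in> set es"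
proof -
  have "\<exists>e' f'. {e,f} = {e',f'} \<and> e' \<in> set es \<and> f' \<in> set es \<and> e' \<noteq> f' \<and> card (e' \<inter> f') = 1"
    using assms unfolding wedges_def by (simp only: mem_Collect_eq)
  then obtain e' f' where ef: "{e,f} = {e',f'}" "e' \<in> set es" "f' \<in> set es" "e' \<noteq> f'" "card (e' \<inter> f') = 1"
    by (elim exE conjE) simp
  from ef(1) have "(e = e' \<and> f = f') \<or> (e = f' \<and> f = e')" by (simp add: doubleton_eq_iff)
  then show ?thesis
  proof
    assume "e = e' \<and> f = f'" then show ?thesis using ef by simp
  next
    assume h: "e = f' \<and> f = e'"
    have "e \<inter> f = e' \<inter> f'" using h by blast
    then show ?thesis using ef h by simp
  qed
qed

lemma doubletons_card:
  assumes "finite B"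
  shows "card {{f, g} | f g. f \<in> B \<and> g \<in> B \<and> f \<noteq> g} = card B choose 2"
proof -
  have "{{f, g} | f g. f \<in> B \<and> g \<in> B \<and> f \<noteq> g} = {X. X \<subseteq> B \<and> card X = 2}"
  proof (intro equalityI subsetI)
    fix X assume "X \<in> {{f, g} | f g. f \<in> B \<and> g \<in> B \<and> f \<noteq> g}"
    then obtain f g where "X = {f,g}" "f \<in> B" "g \<in> B" "f \<noteq> g" by blast
    then show "X \<in> {X. X \<subseteq> B \<and> card X = 2}" by simp
  next
    fix X assume "X \<in> {X. X \<subseteq> B \<and> card X = 2}"
    then have X: "X \<subseteq> B" "card X = 2" by auto
    then obtain x y where "X = {x,y}" "x \<noteq> y" by (auto simp: card_2_iff)
    then show "X \<in> {{f, g} | f g. f \<in> B \<and> g \<in> B \<and> f \<noteq> g}" using X(1) by blast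
  qed
  then show ?thesis using assms by (simp add: n_subsets)
qed

lemma wedge_degree:
  assumes es: "edge_stream es" and e: "e \<in> set es"
  shows "real (card {f\<in>set es. {e, f} \<in> wedges es})^2 \<le> 4 * real (card (wedges es))"
proof -
  define E where "E = set es"
  have c2: "\<And>x. x \<in> E \<Longrightarrow> card x = 2" using es unfolding edge_stream_def E_def by auto
  obtain u v where uv: "e = {u,v}" "u \<noteq> v" using c2[of e] e unfolding E_def by (auto simp: card_2_iff)
  define Nu where "Nu = {f\<in>E. f \<noteq> e \<and> u \<in> f}"
  define Nv where "Nv = {f\<in>E. f \<noteq> e \<and> v \<in> f}"
  have finE: "finite E" unfolding E_def by simp
  have fNu: "finite Nu" "finite Nv" unfolding Nu_def Nv_def using finE by auto
  have sub: "{f\<in>E. {e, f} \<in> wedges es} \<subseteq> Nu \<union> Nv"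
  proof
    fix f assume "f \<in> {f\<in>E. {e, f} \<in> wedges es}"
    then have f: "f \<in> E" "e \<noteq> f" "card (e \<inter> f) = 1" using wedge_char by auto
    then obtain x where "x \<in> e \<inter> f" by (metis card_1_singletonE insertI1)
    then show "f \<in> Nu \<union> Nv" using f uv unfolding Nu_def Nv_def by auto
  qed
  have a_le: "card {f\<in>E. {e, f} \<in> wedges es} \<le> card Nu + card Nv"
  proof -
    have "card {f\<in>E. {e, f} \<in> wedges es} \<le> card (Nu \<union> Nv)" using sub fNu by (intro card_mono) auto
    also have "\<dots> \<le> card Nu + card Nv" by (rule card_Un_le)
    finally show ?thesis .
  qed
  define Wu where "Wu = {{f, g} | f g. f \<in> insert e Nu \<and> g \<in> insert e Nu \<and> f \<noteq> g}"
  define Wv where "Wv = {{f, g} | f g. f \<in> insert e Nv \<and> g \<in> insert e Nv \<and> f \<noteq> g}"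
  have eE: "e \<in> E" using e E_def by simp
  have Wu_sub: "Wu \<subseteq> wedges es"
  proof
    fix X assume "X \<in> Wu"
    then have "\<exists>f g. X = {f,g} \<and> f \<in> insert e Nu \<and> g \<in> insert e Nu \<and> f \<noteq> g" unfolding Wu_def by (simp only: mem_Collect_eq)
    then obtain f g where X: "X = {f,g}" "f \<in> insert e Nu" "g \<in> insert e Nu" "f \<noteq> g" by (elim exE conjE) simp
    have "f \<in> E" "g \<in> E" "u \<in> f" "u \<in> g" using X eE uv unfolding Nu_def by auto
    then have "card (f \<inter> g) = 1" using two_sets_int[of f g u] c2 X by auto
    then have h: "X = {f,g} \<and> f \<in> set es \<and> g \<in> set es \<and> f \<noteq> g \<and> card (f \<inter> g) = 1"
      using X(1,4) \<open>f \<in> E\<close> \<open>g \<in> E\<close> unfolding E_def by blast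
    show "X \<in> wedges es" unfolding wedges_def mem_Collect_eq by (rule exI[of _ f], rule exI[of _ g], rule h)
  qed
  have Wv_sub: "Wv \<subseteq> wedges es"
  proof
    fix X assume "X \<in> Wv"
    then have "\<exists>f g. X = {f,g} \<and> f \<in> insert e Nv \<and> g \<in> insert e Nv \<and> f \<noteq> g" unfolding Wv_def by (simp only: mem_Collect_eq)
    then obtain f g where X: "X = {f,g}" "f \<in> insert e Nv" "g \<in> insert e Nv" "f \<noteq> g" by (elim exE conjE) simp
    have "f \<in> E" "g \<in> E" "v \<in> f" "v \<in> g" using X eE uv unfolding Nv_def by auto
    then have "card (f \<inter> g) = 1" using two_sets_int[of f g v] c2 X by auto
    then have h: "X = {f,g} \<and> f \<in> set es \<and> g \<in> set es \<and> f \<noteq> g \<and> card (f \<inter> g) = 1"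
      using X(1,4) \<open>f \<in> E\<close> \<open>g \<in> E\<close> unfolding E_def by blast
    show "X \<in> wedges es" unfolding wedges_def mem_Collect_eq by (rule exI[of _ f], rule exI[of _ g], rule h)
  qed
  have disj: "Wu \<inter> Wv = {}"
  proof (rule ccontr)
    assume "Wu \<inter> Wv \<noteq> {}"
    then obtain X where "X \<in> Wu" "X \<in> Wv" by blast
    from \<open>X \<in> Wu\<close> have "\<exists>f g. X = {f,g} \<and> f \<in> insert e Nu \<and> g \<in> insert e Nu \<and> f \<noteq> g" unfolding Wu_def by (simp only: mem_Collect_eq)
    then obtain f g where X: "X = {f,g}" "f \<in> insert e Nu" "g \<in> insert e Nu" "f \<noteq> g" by (elim exE conjE) simp
    from \<open>X \<in> Wv\<close> have "\<exists>f g. X = {f,g} \<and> f \<in> insert e Nv \<and> g \<in> insert e Nv \<and> f \<noteq> g" unfolding Wv_def by (simp only: mem_Collect_eq)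
    then obtain f' g' where X': "X = {f',g'}" "f' \<in> insert e Nv" "g' \<in> insert e Nv" by (elim exE conjE) simp
    have fg: "u \<in> f" "u \<in> g" "f \<in> E" "g \<in> E" using X uv eE unfolding Nu_def by auto
    have "v \<in> f'" "v \<in> g'" using X' uv unfolding Nv_def by auto
    then have vfg: "v \<in> f" "v \<in> g" using X X' by (auto simp: doubleton_eq_iff)
    have "{u,v} = f"
    proof (rule card_seteq)
      show "finite f" using c2[OF fg(3)] by (intro card_ge_0_finite) simp
      show "{u,v} \<subseteq> f" using fg vfg by auto
      show "card f \<le> card {u,v}" using c2[OF fg(3)] uv by simp
    qed
    moreover have "{u,v} = g"
    proof (rule card_seteq)
      show "finite g" using c2[OF fg(4)] by (intro card_ge_0_finite) simp
      show "{u,v} \<subseteq> g" using fg vfg by auto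
      show "card g \<le> card {u,v}" using c2[OF fg(4)] uv by simp
    qed
    ultimately show False using X by simp
  qed
  have eNu: "e \<notin> Nu" "e \<notin> Nv" unfolding Nu_def Nv_def by auto
  have cWu: "card Wu = Suc (card Nu) choose 2"
    unfolding Wu_def using doubletons_card[of "insert e Nu"] fNu eNu by simp
  have cWv: "card Wv = Suc (card Nv) choose 2"
    unfolding Wv_def using doubletons_card[of "insert e Nv"] fNu eNu by simp
  have "card Wu + card Wv = card (Wu \<union> Wv)"
    using disj finite_subset[OF Wu_sub finite_wedges] finite_subset[OF Wv_sub finite_wedges]
    by (simp add: card_Un_disjoint)
  also have "\<dots> \<le> card (wedges es)" using Wu_sub Wv_sub finite_wedges by (intro card_mono) auto
  finally have W: "card Wu + card Wv \<le> card (wedges es)" .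
  define p where "p = card Nu"
  define q where "q = card Nv"
  have W2: "real (Suc p * p) + real (Suc q * q) \<le> 2 * real (card (wedges es))"
  proof -
    have "Suc p * p + Suc q * q \<le> 2 * card (wedges es)"
      using W choose2_suc[of p] choose2_suc[of q] cWu cWv unfolding p_def q_def by linarith
    then show ?thesis by (metis of_nat_add of_nat_le_iff of_nat_mult of_nat_numeral)
  qed
  have a_le': "real (card {f\<in>set es. {e, f} \<in> wedges es}) \<le> real p + real q"
    using a_le unfolding p_def q_def E_def by simp
  have "real (card {f\<in>set es. {e, f} \<in> wedges es})^2 \<le> (real p + real q)^2"
    using a_le' by (intro power_mono) auto
  also have "\<dots> \<le> 2 * (real (Suc p * p) + real (Suc q * q))"
  proof -
    have "0 \<le> (real p - real q)^2" by simp
    then show ?thesis by (simp add: power2_eq_square algebra_simps)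
  qed
  also have "\<dots> \<le> 4 * real (card (wedges es))" by (rule dbl[OF W2])
  finally show ?thesis .
qed




lemma tri_edges_3:
  assumes "a \<noteq> b" "a \<noteq> c" "b \<noteq> c"
  shows "tri_edges {a,b,c} = {{a,b},{a,c},{b,c}}"
proof (intro equalityI subsetI)
  fix X assume "X \<in> tri_edges {a,b,c}"
  then have "\<exists>u v. X = {u,v} \<and> u \<in> {a,b,c} \<and> v \<in> {a,b,c} \<and> u \<noteq> v" unfolding tri_edges_def by (simp only: mem_Collect_eq)
  then obtain u v where X: "X = {u,v}" "u \<in> {a,b,c}" "v \<in> {a,b,c}" "u \<noteq> v" by (elim exE conjE) simp
  from X(2,3,4) have "{u,v} = {a,b} \<or> {u,v} = {a,c} \<or> {u,v} = {b,c}"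
    by (auto simp: insert_commute)
  then show "X \<in> {{a,b},{a,c},{b,c}}" using X(1) by simp
next
  fix X assume "X \<in> {{a,b},{a,c},{b,c}}"
  then have "X = {a,b} \<or> X = {a,c} \<or> X = {b,c}" by simp
  then show "X \<in> tri_edges {a,b,c}"
  proof (elim disjE)
    assume h: "X = {a,b}" show ?thesis unfolding tri_edges_def mem_Collect_eq h
      by (rule exI[of _ a], rule exI[of _ b]) (simp add: assms)
  next
    assume h: "X = {a,c}" show ?thesis unfolding tri_edges_def mem_Collect_eq h
      by (rule exI[of _ a], rule exI[of _ c]) (simp add: assms)
  next
    assume h: "X = {b,c}" show ?thesis unfolding tri_edges_def mem_Collect_eq h
      by (rule exI[of _ b], rule exI[of _ c]) (simp add: assms)
  qed
qed

lemma two_tri_edges: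
  assumes d: "a \<noteq> b" "a \<noteq> c" "b \<noteq> c" and x: "x \<in> {{a,b},{a,c},{b,c}}" and y: "y \<in> {{a,b},{a,c},{b,c}}" and "x \<noteq> y"
  shows "x \<union> y = {a,b,c} \<and> card (x \<inter> y) = 1"
proof -
  have x': "x = {a,b} \<or> x = {a,c} \<or> x = {b,c}" using x by simp
  have y': "y = {a,b} \<or> y = {a,c} \<or> y = {b,c}" using y by simp
  have i1: "{a,b} \<inter> {a,c} = {a}" "{a,b} \<inter> {b,c} = {b}" "{a,c} \<inter> {b,c} = {c}" using d by auto
  have i2: "{a,c} \<inter> {a,b} = {a}" "{b,c} \<inter> {a,b} = {b}" "{b,c} \<inter> {a,c} = {c}" using d by auto
  have u: "{a,b} \<union> {a,c} = {a,b,c}" "{a,b} \<union> {b,c} = {a,b,c}" "{a,c} \<union> {b,c} = {a,b,c}"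
          "{a,c} \<union> {a,b} = {a,b,c}" "{b,c} \<union> {a,b} = {a,b,c}" "{b,c} \<union> {a,c} = {a,b,c}" by auto
  from x' y' \<open>x \<noteq> y\<close> show ?thesis using i1 i2 u by auto
qed

lemma three_sort:
  fixes x y z :: nat
  assumes "x \<noteq> y" "y \<noteq> z" "x \<noteq> z"
  shows "\<exists>i j k. {x,y,z} = {i,j,k} \<and> i < j \<and> j < k"
proof (cases "x < y")
  case xy: True
  show ?thesis
  proof (cases "y < z")
    case True then show ?thesis using xy by blast
  next
    case yz: False
    show ?thesis
    proof (cases "x < z")
      case True
      then have "{x,y,z} = {x,z,y} \<and> x < z \<and> z < y" using yz assms by (auto simp: insert_commute)
      then show ?thesis by blast
    next
      case False
      then have "{x,y,z} = {z,x,y} \<and> z < x \<and> x < y" using xy assms by (auto simp: insert_commute)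
      then show ?thesis by blast
    qed
  qed
next
  case yx: False
  show ?thesis
  proof (cases "x < z")
    case True
    then have "{x,y,z} = {y,x,z} \<and> y < x \<and> x < z" using yx assms by (auto simp: insert_commute)
    then show ?thesis by blast
  next
    case xz: False
    show ?thesis
    proof (cases "y < z")
      case True
      then have "{x,y,z} = {y,z,x} \<and> y < z \<and> z < x" using xz assms by (auto simp: insert_commute)
      then show ?thesis by blast
    next
      case False
      then have "{x,y,z} = {z,y,x} \<and> z < y \<and> y < x" using yx assms by (auto simp: insert_commute)
      then show ?thesis by blast
    qed
  qed
qed




lemma tri_decomp:
  assumes "t \<in> triangles es"
  obtains a b c where "t = {a,b,c}" "a \<noteq> b" "a \<noteq> c" "b \<noteq> c"
proof -
  have "card t = 3" using assms unfolding triangles_def by simp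
  then show ?thesis using that unfolding card_3_iff by blast
qed

lemma tri_in_es:
  assumes "t \<in> triangles es" "x \<in> tri_edges t"
  shows "x \<in> set es"
proof -
  have "\<exists>u v. x = {u,v} \<and> u \<in> t \<and> v \<in> t \<and> u \<noteq> v" using assms(2) unfolding tri_edges_def by (simp only: mem_Collect_eq)
  then obtain u v where "x = {u,v}" "u \<in> t" "v \<in> t" "u \<noteq> v" by (elim exE conjE) simp
  then show ?thesis using assms(1) unfolding triangles_def by simp
qed

lemma positions:
  assumes dist: "distinct es" and ijk: "i < j" "j < k" "k < length es"
    and eq: "{es!i, es!j, es!k} = tri_edges t"
  shows "{x. x < length es \<and> es!x \<in> tri_edges t} = {i,j,k}"
proof (rule set_eqI)
  fix x
  show "x \<in> {x. x < length es \<and> es!x \<in> tri_edges t} \<longleftrightarrow> x \<in> {i,j,k}"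
  proof
    assume "x \<in> {x. x < length es \<and> es!x \<in> tri_edges t}"
    then have x: "x < length es" "es!x = es!i \<or> es!x = es!j \<or> es!x = es!k" using eq[symmetric] by auto
    then show "x \<in> {i,j,k}" using nth_eq_iff_index_eq[OF dist] ijk by auto
  next
    assume "x \<in> {i,j,k}"
    then show "x \<in> {x. x < length es \<and> es!x \<in> tri_edges t}" using ijk eq[symmetric] by auto
  qed
qed

lemma tri_positions:
  assumes dist: "distinct es" and t: "t \<in> triangles es"
  shows "\<exists>i j k. i < j \<and> j < k \<and> k < length es \<and> {es!i, es!j, es!k} = tri_edges t"
proof -
  obtain a b c where abc: "t = {a,b,c}" "a \<noteq> b" "a \<noteq> c" "b \<noteq> c" using tri_decomp[OF t] by blast
  have te: "tri_edges t = {{a,b},{a,c},{b,c}}" using abc tri_edges_3 by simp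
  have "{a,b} \<in> set es" "{a,c} \<in> set es" "{b,c} \<in> set es" using tri_in_es[OF t] te by auto
  then obtain ia ib ic where ix: "ia < length es" "es!ia = {a,b}" "ib < length es" "es!ib = {a,c}"
      "ic < length es" "es!ic = {b,c}" by (metis in_set_conv_nth)
  have ne: "{a,b} \<noteq> {a,c}" "{a,b} \<noteq> {b,c}" "{a,c} \<noteq> {b,c}" using abc by (auto simp: doubleton_eq_iff)
  have d: "ia \<noteq> ib" "ib \<noteq> ic" "ia \<noteq> ic" using ix ne by auto
  obtain i j k where ijk: "{ia,ib,ic} = {i,j,k}" "i < j" "j < k" using three_sort[OF d] by blast
  have "k \<in> {ia,ib,ic}" using ijk by simp
  then have kn: "k < length es" using ix by auto
  have "{es!i, es!j, es!k} = (\<lambda>x. es!x) ` {i,j,k}" by simp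
  also have "\<dots> = (\<lambda>x. es!x) ` {ia,ib,ic}" using ijk by simp
  also have "\<dots> = tri_edges t" using ix te by simp
  finally show ?thesis using ijk kn by blast
qed

lemma fc_facts:
  assumes es: "edge_stream es"
  shows "fc_wedges es \<subseteq> wedges es \<and> card (fc_wedges es) = card (triangles es)"
proof -
  have dist: "distinct es" using es unfolding edge_stream_def by simp
  define P where "P = (\<lambda>t. {x. x < length es \<and> es!x \<in> tri_edges t})"
  define wf where "wf = (\<lambda>t. (\<lambda>x. es!x) ` (P t - {Max (P t)}))"
  have wfA: "wf t = {es!i, es!j}"
    if "i < j" "j < k" "k < length es" "{es!i, es!j, es!k} = tri_edges t" for i j k t
  proof -
    have Pt: "P t = {i,j,k}" unfolding P_def using positions[OF dist that] .
    have "Max {i,j,k} = k" using that by (simp add: Max_insert)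
    then have "P t - {Max (P t)} = {i,j}" using Pt that by auto
    then show ?thesis unfolding wf_def by simp
  qed
  have fc_char: "\<exists>i j k t. w = {es!i, es!j} \<and> i < j \<and> j < k \<and> k < length es \<and> t \<in> triangles es \<and> {es!i, es!j, es!k} = tri_edges t"
    if "w \<in> fc_wedges es" for w
  proof -
    have "\<exists>i j k. w = {es!i, es!j} \<and> i < j \<and> j < k \<and> k < length es \<and> (\<exists>t\<in>triangles es. {es!i, es!j, es!k} = tri_edges t)"
      using that unfolding fc_wedges_def by (simp only: mem_Collect_eq)
    then obtain i j k where h: "w = {es!i, es!j}" "i < j" "j < k" "k < length es" "\<exists>t\<in>triangles es. {es!i, es!j, es!k} = tri_edges t"
      by (elim exE conjE) simp
    from h(5) obtain t where t: "t \<in> triangles es" "{es!i, es!j, es!k} = tri_edges t" by (elim bexE) simp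
    show ?thesis by (rule exI[of _ i], rule exI[of _ j], rule exI[of _ k], rule exI[of _ t]) (simp only: h(1-4) t simp_thms)
  qed
  have tri_two: "(es!i) \<union> (es!j) = t \<and> card (es!i \<inter> es!j) = 1"
    if T: "t \<in> triangles es" "i < j" "j < k" "k < length es" "{es!i, es!j, es!k} = tri_edges t" for i j k t
  proof -
    obtain a b c where abc: "t = {a,b,c}" "a \<noteq> b" "a \<noteq> c" "b \<noteq> c" using tri_decomp[OF T(1)] by blast
    have te: "tri_edges t = {{a,b},{a,c},{b,c}}" using abc tri_edges_3 by simp
    have "es!i \<noteq> es!j" using nth_eq_iff_index_eq[OF dist] T by auto
    moreover have "es!i \<in> {{a,b},{a,c},{b,c}}" "es!j \<in> {{a,b},{a,c},{b,c}}" using T(5) te by blast+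
    ultimately have "es!i \<union> es!j = {a,b,c} \<and> card (es!i \<inter> es!j) = 1"
      using two_tri_edges[OF abc(2-4)] by simp
    then show ?thesis using abc(1) by simp
  qed
  have sub: "fc_wedges es \<subseteq> wedges es"
  proof
    fix w assume "w \<in> fc_wedges es"
    then obtain i j k t where h: "w = {es!i, es!j}" "i < j" "j < k" "k < length es" "t \<in> triangles es" "{es!i, es!j, es!k} = tri_edges t"
      using fc_char[OF \<open>w \<in> fc_wedges es\<close>] by (elim exE conjE) simp
    have c1: "card (es!i \<inter> es!j) = 1" using tri_two[OF h(5,2,3,4,6)] by simp
    have ne: "es!i \<noteq> es!j" using nth_eq_iff_index_eq[OF dist] h by auto
    have mem: "es!i \<in> set es" "es!j \<in> set es" using h by auto
    have hh: "w = {es!i, es!j} \<and> es!i \<in> set es \<and> es!j \<in> set es \<and> es!i \<noteq> es!j \<and> card (es!i \<inter> es!j) = 1"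
      using h(1) c1 ne mem by blast
    show "w \<in> wedges es" unfolding wedges_def mem_Collect_eq by (rule exI[of _ "es!i"], rule exI[of _ "es!j"], rule hh)
  qed
  have img: "fc_wedges es = wf ` triangles es"
  proof (intro equalityI subsetI)
    fix w assume "w \<in> fc_wedges es"
    then obtain i j k t where h: "w = {es!i, es!j}" "i < j" "j < k" "k < length es" "t \<in> triangles es" "{es!i, es!j, es!k} = tri_edges t"
      using fc_char[OF \<open>w \<in> fc_wedges es\<close>] by (elim exE conjE) simp
    have "wf t = w" using wfA[OF h(2,3,4,6)] h(1) by simp
    then show "w \<in> wf ` triangles es" using h(5) by blast
  next
    fix w assume "w \<in> wf ` triangles es"
    then obtain t where t: "t \<in> triangles es" "w = wf t" by blast
    obtain i j k where h: "i < j" "j < k" "k < length es" "{es!i, es!j, es!k} = tri_edges t"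
      using tri_positions[OF dist t(1)] by blast
    have w: "w = {es!i, es!j}" using wfA[OF h] t(2) by simp
    have hh: "w = {es!i, es!j} \<and> i < j \<and> j < k \<and> k < length es \<and> (\<exists>t\<in>triangles es. {es!i, es!j, es!k} = tri_edges t)"
      using w h t(1) by blast
    show "w \<in> fc_wedges es" unfolding fc_wedges_def mem_Collect_eq
      by (rule exI[of _ i], rule exI[of _ j], rule exI[of _ k], rule hh)
  qed
  have union: "\<Union>(wf t) = t" if T: "t \<in> triangles es" for t
  proof -
    obtain i j k where h: "i < j" "j < k" "k < length es" "{es!i, es!j, es!k} = tri_edges t"
      using tri_positions[OF dist T] by blast
    have "\<Union>(wf t) = es!i \<union> es!j" using wfA[OF h] by simp
    also have "\<dots> = t" using tri_two[OF T h] by simp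
    finally show ?thesis .
  qed
  have inj: "inj_on wf (triangles es)"
  proof (rule inj_onI)
    fix t t' assume "t \<in> triangles es" "t' \<in> triangles es" "wf t = wf t'"
    then show "t = t'" using union by metis
  qed
  show ?thesis using sub img inj card_image by metis
qed




lemma cheb_pmf:
  fixes D :: "'b pmf" and X :: "'b \<Rightarrow> real"
  assumes fin: "finite (set_pmf D)" and t: "t > 0"
    and EX: "measure_pmf.expectation D X = \<mu>"
    and var: "measure_pmf.variance D X \<le> V"
    and key: "V / t^2 < \<beta>"
  shows "measure_pmf.prob D {r. \<bar>X r - \<mu>\<bar> \<le> t} > 1 - \<beta>"
proof -
  have int: "integrable (measure_pmf D) (\<lambda>x. X x ^ 2)" using fin by (rule integrable_measure_pmf_finite)
  have ch: "measure_pmf.prob D {x\<in>space (measure_pmf D). \<bar>X x - measure_pmf.expectation D X\<bar> \<ge> t}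
      \<le> measure_pmf.variance D X / t^2"
    by (rule measure_pmf.Chebyshev_inequality) (use int t in auto)
  then have ch': "measure_pmf.prob D {x. \<bar>X x - \<mu>\<bar> \<ge> t} \<le> V / t^2"
    using var t EX by (simp add: divide_right_mono order_trans)
  have "measure_pmf.prob D {r. \<bar>X r - \<mu>\<bar> \<le> t} \<ge> measure_pmf.prob D (UNIV - {x. \<bar>X x - \<mu>\<bar> \<ge> t})"
    by (intro measure_pmf.finite_measure_mono) auto
  also have "measure_pmf.prob D (UNIV - {x. \<bar>X x - \<mu>\<bar> \<ge> t}) = 1 - measure_pmf.prob D {x. \<bar>X x - \<mu>\<bar> \<ge> t}"
    using measure_pmf.prob_compl[of "{x. \<bar>X x - \<mu>\<bar> \<ge> t}" D] by simp
  finally show ?thesis using ch' key by linarith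
qed

lemma sqrt_bound_sum:
  fixes a :: "'x \<Rightarrow> real"
  assumes "finite E" "\<And>x. x \<in> E \<Longrightarrow> a x \<ge> 0" "\<And>x. x \<in> E \<Longrightarrow> a x ^ 2 \<le> 4 * W"
  shows "(\<Sum>x\<in>E. a x ^ 2) \<le> 2 * sqrt W * (\<Sum>x\<in>E. a x)"
proof -
  have "a x ^ 2 \<le> 2 * sqrt W * a x" if x: "x \<in> E" for x
  proof -
    have W0: "W \<ge> 0" using assms(3)[OF x] by (smt (verit) zero_le_power2)
    have "a x = sqrt (a x ^ 2)" using assms(2)[OF x] by simp
    also have "\<dots> \<le> sqrt (4 * W)" using assms(3)[OF x] by (rule real_sqrt_le_mono)
    also have "\<dots> = 2 * sqrt W" by (simp add: real_sqrt_mult)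
    finally have "a x \<le> 2 * sqrt W" .
    then have "a x * a x \<le> (2 * sqrt W) * a x" using assms(2)[OF x] by (rule mult_right_mono)
    then show ?thesis by (simp add: power2_eq_square)
  qed
  then have "(\<Sum>x\<in>E. a x ^ 2) \<le> (\<Sum>x\<in>E. 2 * sqrt W * a x)" by (rule sum_mono)
  also have "\<dots> = 2 * sqrt W * (\<Sum>x\<in>E. a x)" by (simp add: sum_distrib_left)
  finally show ?thesis .
qed

theorem mainTheorem8:
  shows "\<exists>c::real > 0. \<forall>(es :: nat set list) (\<beta>::real) (s::nat).
    edge_stream es \<longrightarrow>
    card (wedges es) \<ge> length es \<longrightarrow>
    card (triangles es) \<ge> 1 \<longrightarrow>
    0 < \<beta> \<longrightarrow> \<beta> < 1 \<longrightarrow>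
    real s \<ge> c * real (length es) / (\<beta> ^ 3 * sqrt (real (card (triangles es)))) \<longrightarrow>
    (let m = real (length es); W = real (card (wedges es)); T = real (card (triangles es));
         \<beta>' = \<beta> / 5; D = edge_sample es s;
         EY = measure_pmf.expectation D (\<lambda>r. real (Ycount es s r));
         EZ = measure_pmf.expectation D (\<lambda>r. real (Zcount es s r))
     in EY = real s * (real s - 1) * W / m ^ 2 \<and>
        measure_pmf.prob D {r. \<bar>real (Ycount es s r) - EY\<bar> \<le> \<beta>' * EY} > 1 - \<beta>' \<and>
        EZ = real s * (real s - 1) * T / m ^ 2 \<and>
        measure_pmf.prob D {r. \<bar>real (Zcount es s r) - EZ\<bar> \<le> (\<beta>' * W / T) * EZ} > 1 - \<beta>')"
proof (intro exI[of _ "100000::real"] conjI allI impI)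
  show "(0::real) < 100000" by simp
  fix es :: "nat set list" and \<beta> :: real and s :: nat
  assume es: "edge_stream es" and Wm: "card (wedges es) \<ge> length es" and T1: "card (triangles es) \<ge> 1"
    and b0: "0 < \<beta>" and b1: "\<beta> < 1"
    and sH: "real s \<ge> 100000 * real (length es) / (\<beta> ^ 3 * sqrt (real (card (triangles es))))"
  define E where "E = set es"
  define m where "m = real (length es)"
  define W where "W = real (card (wedges es))"
  define T where "T = real (card (triangles es))"
  define D where "D = edge_sample es s"
  have dist: "distinct es" using es unfolding edge_stream_def by simp
  have cardE: "card E = length es" unfolding E_def using dist by (simp add: distinct_card)
  have finE: "finite E" unfolding E_def by simp
  have fc: "fc_wedges es \<subseteq> wedges es" "card (fc_wedges es) = card (triangles es)" using fc_facts[OF es] by auto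
  have TW: "T \<le> W" unfolding T_def W_def using fc card_mono[OF finite_wedges fc(1)] by simp
  have Wm2: "W \<le> m^2" unfolding W_def m_def using card_wedges_le[of es] by (metis of_nat_le_iff of_nat_power)
  have T1': "T \<ge> 1" unfolding T_def using T1 by simp
  have mpos: "m > 0"
  proof -
    have "m^2 \<ge> 1" using Wm2 TW T1' by linarith
    then have "m \<noteq> 0" by auto
    then show ?thesis unfolding m_def by simp
  qed
  have Ene: "E \<noteq> {}" using mpos cardE unfolding m_def by auto
  have DD: "D = Pi_pmf {..<s} undefined (\<lambda>_. pmf_of_set E)" unfolding D_def edge_sample_def E_def ..
  have finD: "finite (set_pmf D)" unfolding DD using finE Ene by (auto simp: set_Pi_pmf)
  have sqT: "sqrt T \<ge> 1" using T1' by simp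
  have sqTm: "sqrt T \<le> m"
  proof -
    have "sqrt T \<le> sqrt (m^2)" using TW Wm2 by (intro real_sqrt_le_mono) linarith
    then show ?thesis using mpos by simp
  qed
  have b3: "0 < \<beta>^3" "\<beta>^3 \<le> 1" using b0 b1 by (simp, simp add: power_le_one)
  have den: "0 < \<beta>^3 * sqrt T" "\<beta>^3 * sqrt T \<le> m"
  proof -
    show "0 < \<beta>^3 * sqrt T" using b3 sqT by simp
    have "\<beta>^3 * sqrt T \<le> 1 * sqrt T" using b3 sqT by (intro mult_right_mono) auto
    then show "\<beta>^3 * sqrt T \<le> m" using sqTm by simp
  qed
  have sH': "real s \<ge> 100000 * m / (\<beta>^3 * sqrt T)" using sH unfolding m_def T_def .
  have "100000 * m / (\<beta>^3 * sqrt T) \<ge> 100000 * m / m"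
    using den mpos by (intro divide_left_mono) auto
  then have s2: "real s \<ge> 2" using sH' mpos by simp
  have hyp: "\<beta>^3 * real s * sqrt T \<ge> 100000 * m"
  proof -
    have "100000 * m \<le> real s * (\<beta>^3 * sqrt T)" using sH' den(1) by (simp add: pos_divide_le_eq)
    then show ?thesis by (simp add: algebra_simps)
  qed
  define QY where "QY = (\<lambda>x y. {x, y} \<in> wedges es)"
  define QZ where "QZ = (\<lambda>x y. {x, y} \<in> fc_wedges es)"
  have symY: "\<And>x y. QY x y = QY y x" unfolding QY_def by (simp add: insert_commute)
  have symZ: "\<And>x y. QZ x y = QZ y x" unfolding QZ_def by (simp add: insert_commute)
  have Yeq: "(\<lambda>r. real (Ycount es s r)) = (\<lambda>r. real (card {(i,j). i<j \<and> j<s \<and> QY (r i) (r j)}))"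
    unfolding Ycount_def QY_def ..
  have Zeq: "(\<lambda>r. real (Zcount es s r)) = (\<lambda>r. real (card {(i,j). i<j \<and> j<s \<and> QZ (r i) (r j)}))"
    unfolding Zcount_def QZ_def ..
  define aY where "aY = (\<lambda>x. real (card {y\<in>E. QY x y}))"
  define aZ where "aZ = (\<lambda>x. real (card {y\<in>E. QZ x y}))"
  have mE: "real (card E) = m" unfolding m_def cardE ..
  note MY = pair_count_moments[where Q=QY and d=undefined and s=s, OF finE Ene symY, folded DD Yeq, unfolded mE]
  note MZ = pair_count_moments[where Q=QZ and d=undefined and s=s, OF finE Ene symZ, folded DD Zeq, unfolded mE]
  have NY: "(\<Sum>x\<in>E. real (card {y\<in>E. QY x y})) = 2 * W"
    unfolding QY_def W_def E_def using doubleton_pair_count[OF wedges_sub] by simp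
  have NZ: "(\<Sum>x\<in>E. real (card {y\<in>E. QZ x y})) = 2 * T"
  proof -
    have "fc_wedges es \<subseteq> {{e, f} | e f. e \<in> set es \<and> f \<in> set es \<and> e \<noteq> f}" using fc(1) wedges_sub by blast
    then show ?thesis unfolding QZ_def T_def E_def using doubleton_pair_count[of "fc_wedges es" "set es"] fc(2) by simp
  qed
  have AY: "(\<Sum>x\<in>E. real (card {y\<in>E. QY x y})^2) \<le> 4 * W * sqrt W"
  proof -
    have "(\<Sum>x\<in>E. real (card {y\<in>E. QY x y})^2) \<le> 2 * sqrt W * (\<Sum>x\<in>E. real (card {y\<in>E. QY x y}))"
    proof (rule sqrt_bound_sum[OF finE])
      fix x assume "x \<in> E"
      then show "real (card {y\<in>E. QY x y})^2 \<le> 4 * W"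
        unfolding QY_def W_def E_def using wedge_degree[OF es] by simp
    qed simp
    then show ?thesis unfolding NY by (simp add: algebra_simps)
  qed
  have AZ: "(\<Sum>x\<in>E. real (card {y\<in>E. QZ x y})^2) \<le> (\<Sum>x\<in>E. real (card {y\<in>E. QY x y})^2)"
  proof (rule sum_mono)
    fix x assume "x \<in> E"
    have "card {y\<in>E. QZ x y} \<le> card {y\<in>E. QY x y}"
      using fc(1) finE unfolding QZ_def QY_def by (intro card_mono) auto
    then show "real (card {y\<in>E. QZ x y})^2 \<le> real (card {y\<in>E. QY x y})^2" by (intro power_mono) auto
  qed
  define EY where "EY = measure_pmf.expectation D (\<lambda>r. real (Ycount es s r))"
  define EZ where "EZ = measure_pmf.expectation D (\<lambda>r. real (Zcount es s r))"
  have EYv: "EY = real s * (real s - 1) * W / m^2" unfolding EY_def using MY(1) NY by simp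
  have EZv: "EZ = real s * (real s - 1) * T / m^2" unfolding EZ_def using MZ(1) NZ by simp
  define VB where "VB = EY + 16 * real s ^ 3 * (sqrt W)^3 / m^3"
  have W0: "W \<ge> 0" unfolding W_def by simp
  have sqW3: "(sqrt W)^3 = W * sqrt W" using W0 by (simp add: power3_eq_cube)
  have s3pos: "0 \<le> 4 * real s ^ 3 / m^3" using mpos by simp
  have VY0: "measure_pmf.variance D (\<lambda>r. real (Ycount es s r)) \<le> EY + 4 * real s ^ 3 * (\<Sum>x\<in>E. real (card {y\<in>E. QY x y})^2) / m^3"
    using MY(2) unfolding EY_def by (simp add: Ycount_def QY_def)
  have VZ0: "measure_pmf.variance D (\<lambda>r. real (Zcount es s r)) \<le> EZ + 4 * real s ^ 3 * (\<Sum>x\<in>E. real (card {y\<in>E. QZ x y})^2) / m^3"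
    using MZ(2) unfolding EZ_def by (simp add: Zcount_def QZ_def)
  have bY: "4 * real s ^ 3 * (\<Sum>x\<in>E. real (card {y\<in>E. QY x y})^2) / m^3 \<le> 16 * real s ^ 3 * (sqrt W)^3 / m^3"
  proof -
    have "4 * real s ^ 3 * (\<Sum>x\<in>E. real (card {y\<in>E. QY x y})^2) / m^3 \<le> 4 * real s ^ 3 * (4 * W * sqrt W) / m^3"
      using AY mpos by (intro divide_right_mono mult_left_mono) auto
    also have "\<dots> = 16 * real s ^ 3 * (sqrt W)^3 / m^3" unfolding sqW3 by simp
    finally show ?thesis .
  qed
  have bZ: "4 * real s ^ 3 * (\<Sum>x\<in>E. real (card {y\<in>E. QZ x y})^2) / m^3 \<le> 4 * real s ^ 3 * (\<Sum>x\<in>E. real (card {y\<in>E. QY x y})^2) / m^3"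
    using AZ mpos by (intro divide_right_mono mult_left_mono) auto
  have VY: "measure_pmf.variance D (\<lambda>r. real (Ycount es s r)) \<le> VB"
    using VY0 bY unfolding VB_def by linarith
  have EZY: "EZ \<le> EY" unfolding EZv EYv using TW s2 mpos
    by (intro divide_right_mono mult_left_mono) auto
  have VZ: "measure_pmf.variance D (\<lambda>r. real (Zcount es s r)) \<le> VB"
    using VZ0 bZ bY EZY unfolding VB_def by linarith
  have e2: "EY * (2 * m^2) \<ge> real s ^ 2 * (sqrt W)^2"
  proof -
    have "EY * (2 * m^2) = 2 * real s * (real s - 1) * W" unfolding EYv using mpos by simp
    also have "\<dots> \<ge> real s * real s * W" using s2 W0
      by (intro mult_right_mono) (auto intro!: mult_left_mono)
    finally show ?thesis using W0 by (simp add: power2_eq_square)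
  qed
  have wt: "sqrt W \<ge> sqrt T" using TW by simp
  have key: "VB < (\<beta>^3 / 125) * EY^2"
    unfolding VB_def using key_arith[OF mpos sqT wt b3(1) b3(2) s2 hyp _ e2] by simp
  have EYpos: "EY > 0" unfolding EYv using s2 mpos T1' TW by simp
  have tpos: "\<beta> / 5 * EY > 0" using b0 EYpos by simp
  have ratio: "VB / (\<beta> / 5 * EY)^2 < \<beta> / 5"
  proof -
    have "(\<beta> / 5) * (\<beta> / 5 * EY)^2 = (\<beta>^3 / 125) * EY^2" by (simp add: power2_eq_square power3_eq_cube)
    then show ?thesis using key tpos b0 EYpos by (simp add: divide_less_eq)
  qed
  have PY: "measure_pmf.prob D {r. \<bar>real (Ycount es s r) - EY\<bar> \<le> \<beta> / 5 * EY} > 1 - \<beta> / 5"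
    by (rule cheb_pmf[OF finD tpos EY_def[symmetric] VY ratio])
  have T0: "T \<noteq> 0" using T1' by simp
  have tZ: "\<beta> / 5 * W / T * EZ = \<beta> / 5 * EY"
    unfolding EZv EYv using T0 mpos by (simp add: field_simps)
  have PZ: "measure_pmf.prob D {r. \<bar>real (Zcount es s r) - EZ\<bar> \<le> \<beta> / 5 * W / T * EZ} > 1 - \<beta> / 5"
    unfolding tZ by (rule cheb_pmf[OF finD tpos EZ_def[symmetric] VZ ratio])
  show "let m = real (length es); W = real (card (wedges es)); T = real (card (triangles es));
         \<beta>' = \<beta> / 5; D = edge_sample es s;
         EY = measure_pmf.expectation D (\<lambda>r. real (Ycount es s r));
         EZ = measure_pmf.expectation D (\<lambda>r. real (Zcount es s r))
     in EY = real s * (real s - 1) * W / m ^ 2 \<and>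
        measure_pmf.prob D {r. \<bar>real (Ycount es s r) - EY\<bar> \<le> \<beta>' * EY} > 1 - \<beta>' \<and>
        EZ = real s * (real s - 1) * T / m ^ 2 \<and>
        measure_pmf.prob D {r. \<bar>real (Zcount es s r) - EZ\<bar> \<le> (\<beta>' * W / T) * EZ} > 1 - \<beta>'"
    unfolding Let_def m_def[symmetric] W_def[symmetric] T_def[symmetric] D_def[symmetric]
      EY_def[symmetric] EZ_def[symmetric]
    using EYv PY EZv PZ by blast
qed


end
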